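(* Let $-\infty\le a<b\le\infty$, let $f,g$ be differentiable on $(a,b)$ with $g'\ne0$ on $(a,b)$, and suppose $\lim_{x\to a^+}f(x)=\lim_{x\to a^+}g(x)=0$. Let $H_{f,g}=\frac{f'}{g'}g-f$ and $H_{f,g}(b^-)=\lim_{x\to b^-}H_{f,g}(x)\in[-\infty,\infty]$. (A) Suppose there is $c\in(a,b)$ such that $f'/g'$ is strictly increasing on $(a,c)$ and strictly decreasing on $(c,b)$. Then: (i) if $\operatorname{sgn}(g')\cdot\operatorname{sgn}(H_{f,g}(b^-))\ge 0$, $f/g$ is strictly increasing on $(a,b)$; (ii) if $\operatorname{sgn}(g')\cdot\operatorname{sgn}(H_{f,g}(b^-))<0$, there is a unique $x_a\in(a,b)$ such that $f/g$ is strictly increasing on $(a,x_a)$ and strictly decreasing on $(x_a,b)$. (B) Suppose there is $c\in(a,b)$ such that $f'/g'$ is strictly decreasing on $(a,c)$ and strictly increasing on $(c,b)$. Then: (i) if $\operatorname{sgn}(g')\cdot\operatorname{sgn}(H_{f,g}(b^-))\le 0$, $f/g$ is strictly decreasing on $(a,b)$; (ii) if $\operatorname{sgn}(g')\cdot\operatorname{sgn}(H_{f,g}(b^-))>0$, there is a unique $x_a\in(a,b)$ such that $f/g$ is strictly decreasing on $(a,x_a)$ and strictly increasing on $(x_a,b)$.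
   Context: $H_{f,g}(x)=\frac{f'(x)}{g'(x)}g(x)-f(x)$ for $x\in(a,b)$. Here $\operatorname{sgn}(g')$ is the (constant) sign of $g'$ on $(a,b)$, and $\operatorname{sgn}(\pm\infty)=\pm1$. *)

theory Defs
  imports "HOL-Analysis.Analysis"
begin

definition eoi :: "ereal \<Rightarrow> ereal \<Rightarrow> real set" where
  "eoi a b = {x::real. a < ereal x \<and> ereal x < b}"

definition at_right_e :: "ereal \<Rightarrow> real filter" where
  "at_right_e a = (if a = -\<infinity> then at_bot else at_right (real_of_ereal a))"

definition at_left_e :: "ereal \<Rightarrow> real filter" where
  "at_left_e b = (if b = \<infinity> then at_top else at_left (real_of_ereal b))"

definition esgn :: "ereal \<Rightarrow> real" where
  "esgn L = (if L > 0 then 1 else if L < 0 then -1 else 0)"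

definition Hfg :: "(real \<Rightarrow> real) \<Rightarrow> (real \<Rightarrow> real) \<Rightarrow> (real \<Rightarrow> real) \<Rightarrow> (real \<Rightarrow> real) \<Rightarrow> real \<Rightarrow> real" where
  "Hfg f g f' g' x = f' x / g' x * g x - f x"

end

theory Submission
  imports Defs
begin


lemma deriv_sign_pos:
  fixes g g' :: "real \<Rightarrow> real"
  assumes xy: "x < y" and d: "\<And>s. x \<le> s \<Longrightarrow> s \<le> y \<Longrightarrow> (g has_real_derivative g' s) (at s)"
    and nz: "\<And>s. x \<le> s \<Longrightarrow> s \<le> y \<Longrightarrow> g' s \<noteq> 0"
    and gx: "g' x > 0"
  shows "g' y > 0"
proof (rule ccontr)
  assume "\<not> g' y > 0"
  with nz[of y] xy have gy: "g' y < 0" by auto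
  have cont: "continuous_on {x..y} g"
    by (meson DERIV_isCont atLeastAtMost_iff continuous_at_imp_continuous_on d)
  obtain z where z: "z \<in> {x..y}" and zm: "\<forall>w\<in>{x..y}. g w \<le> g z"
    using continuous_attains_sup[OF compact_Icc _ cont] xy by auto
  show False
  proof (cases "z = x")
    case True
    obtain e where e: "e > 0" "\<forall>h>0. h < e \<longrightarrow> g x < g (x + h)"
      using DERIV_pos_inc_right[OF d[of x] gx] xy by auto
    define h where "h = min (e/2) ((y-x)/2)"
    have "h > 0" "h < e" using e xy by (auto simp: h_def)
    then have "g x < g (x+h)" using e by blast
    moreover have "x + h \<in> {x..y}" using e xy by (auto simp: h_def min_def field_simps)
    then have "g (x+h) \<le> g z" using zm by blast
    moreover note this
    ultimately show False using True by simp
  next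
    case F1: False
    show False
    proof (cases "z = y")
      case True
      obtain e where e: "e > 0" "\<forall>h>0. h < e \<longrightarrow> g y < g (y - h)"
        using DERIV_neg_dec_left[OF d[of y] gy] xy by auto
      define h where "h = min (e/2) ((y-x)/2)"
      have "h > 0" "h < e" using e xy by (auto simp: h_def)
      then have "g y < g (y-h)" using e by blast
      moreover have "y - h \<in> {x..y}" using e xy by (auto simp: h_def min_def field_simps)
      then have "g (y-h) \<le> g z" using zm by blast
      moreover note this
      ultimately show False using True by simp
    next
      case False
      with F1 z have zi: "x < z" "z < y" by auto
      have "g' z = 0"
        by (rule DERIV_local_max[OF d[of z], of "min (z-x) (y-z)"]) (use zi zm in \<open>auto simp: abs_less_iff\<close>)
      with nz[of z] zi show False by auto
    qed
  qed
qed

lemma deriv_sign_neg: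
  fixes g g' :: "real \<Rightarrow> real"
  assumes xy: "x < y" and d: "\<And>s. x \<le> s \<Longrightarrow> s \<le> y \<Longrightarrow> (g has_real_derivative g' s) (at s)"
    and nz: "\<And>s. x \<le> s \<Longrightarrow> s \<le> y \<Longrightarrow> g' s \<noteq> 0"
    and gx: "g' x < 0"
  shows "g' y < 0"
proof -
  have "(\<lambda>s. - g' s) y > 0"
    by (rule deriv_sign_pos[of x y "\<lambda>s. - g s"]) (use assms in \<open>auto intro: DERIV_minus\<close>)
  then show ?thesis by simp
qed

lemma eoi_nonempty: "a < b \<Longrightarrow> \<exists>x. x \<in> eoi a b"
  using ereal_dense2 by (auto simp: eoi_def)

lemma eoi_interval: "x \<in> eoi a b \<Longrightarrow> y \<in> eoi a b \<Longrightarrow> x \<le> s \<Longrightarrow> s \<le> y \<Longrightarrow> s \<in> eoi a b"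
proof -
  assume "x \<in> eoi a b" "y \<in> eoi a b" "x \<le> s" "s \<le> y"
  moreover have "ereal x \<le> ereal s" "ereal s \<le> ereal y" using \<open>x \<le> s\<close> \<open>s \<le> y\<close> by auto
  ultimately have "a < ereal s" "ereal s < b" unfolding eoi_def
    using order.strict_trans1 order.strict_trans2 by blast+
  then show ?thesis unfolding eoi_def by simp
qed

lemma const_sign:
  fixes g g' :: "real \<Rightarrow> real"
  assumes ab: "a < b"
    and dg: "\<And>x. x \<in> eoi a b \<Longrightarrow> (g has_real_derivative g' x) (at x)"
    and g'nz: "\<And>x. x \<in> eoi a b \<Longrightarrow> g' x \<noteq> 0"
  shows "(\<forall>x\<in>eoi a b. g' x > 0) \<or> (\<forall>x\<in>eoi a b. g' x < 0)"
proof -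
  obtain x0 where x0: "x0 \<in> eoi a b" using eoi_nonempty[OF ab] by auto
  have key: "g' y > 0" if "g' x0 > 0" "y \<in> eoi a b" for y
  proof -
    consider "y = x0" | "x0 < y" | "y < x0" by linarith
    then show ?thesis
    proof cases
      case 1 then show ?thesis using that by simp
    next
      case 2 show ?thesis
        by (rule deriv_sign_pos[OF 2]) (use that x0 eoi_interval dg g'nz in \<open>blast+\<close>)
    next
      case 3 show ?thesis
      proof (rule ccontr)
        assume "\<not> g' y > 0" with g'nz[OF that(2)] have "g' y < 0" by auto
        have "g' x0 < 0"
          by (rule deriv_sign_neg[OF 3]) (use \<open>g' y < 0\<close> that x0 eoi_interval dg g'nz in \<open>blast+\<close>)
        with that show False by simp
      qed
    qed
  qed
  have key2: "g' y < 0" if "g' x0 < 0" "y \<in> eoi a b" for y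
  proof -
    consider "y = x0" | "x0 < y" | "y < x0" by linarith
    then show ?thesis
    proof cases
      case 1 then show ?thesis using that by simp
    next
      case 2 show ?thesis
        by (rule deriv_sign_neg[OF 2]) (use that x0 eoi_interval dg g'nz in \<open>blast+\<close>)
    next
      case 3 show ?thesis
      proof (rule ccontr)
        assume "\<not> g' y < 0" with g'nz[OF that(2)] have "g' y > 0" by auto
        have "g' x0 > 0"
          by (rule deriv_sign_pos[OF 3]) (use \<open>g' y > 0\<close> that x0 eoi_interval dg g'nz in \<open>blast+\<close>)
        with that show False by simp
      qed
    qed
  qed
  show ?thesis using key key2 g'nz[OF x0] by (meson linorder_neqE_linordered_idom)
qed



lemma ereal_lt_trans1: "t < y \<Longrightarrow> ereal y < b \<Longrightarrow> ereal t < b"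
  by (metis less_ereal.simps(1) order.strict_trans)
lemma ereal_lt_trans2: "y < t \<Longrightarrow> a < ereal y \<Longrightarrow> a < ereal t"
  by (metis less_ereal.simps(1) order.strict_trans)

lemma F1:
  assumes "y \<in> eoi a b"
  shows "eventually (\<lambda>t. t \<in> eoi a b \<and> t < y) (at_right_e a)"
proof (cases "a = -\<infinity>")
  case True
  have ev: "eventually (\<lambda>t. t < y) at_bot" unfolding eventually_at_bot_dense by auto
  have *: "\<forall>t. t < y \<longrightarrow> t \<in> eoi a b \<and> t < y" using True assms by (auto simp: eoi_def intro: ereal_lt_trans1)
  have "eventually (\<lambda>t. t \<in> eoi a b \<and> t < y) at_bot" using ev by (rule eventually_mono) (use * in blast)
  then show ?thesis using True unfolding at_right_e_def by simp
next
  case False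
  have "a < ereal y" using assms by (auto simp: eoi_def)
  with False obtain a0 where a0: "a = ereal a0" by (cases a) auto
  with \<open>a < ereal y\<close> have "a0 < y" by simp
  have "eventually (\<lambda>t. a0 < t \<and> t < y) (at_right a0)"
    unfolding eventually_at_right_field using \<open>a0 < y\<close> by auto
  then show ?thesis using a0 assms unfolding at_right_e_def eoi_def
    by (auto elim!: eventually_mono intro: ereal_lt_trans1 ereal_lt_trans2)
qed

lemma F2: "at_right_e a \<noteq> bot"
  by (auto simp: at_right_e_def)

lemma F3:
  assumes "y \<in> eoi a b"
  shows "eventually (\<lambda>t. t \<in> eoi a b \<and> y < t) (at_left_e b)"
proof (cases "b = \<infinity>")
  case True
  have ev: "eventually (\<lambda>t. y < t) at_top" by simp
  have *: "\<forall>t. y < t \<longrightarrow> t \<in> eoi a b \<and> y < t" using True assms by (auto simp: eoi_def intro: ereal_lt_trans2)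
  have "eventually (\<lambda>t. t \<in> eoi a b \<and> y < t) at_top" using ev by (rule eventually_mono) (use * in blast)
  then show ?thesis using True unfolding at_left_e_def by simp
next
  case False
  have "ereal y < b" using assms by (auto simp: eoi_def)
  with False obtain b0 where b0: "b = ereal b0" by (cases b) auto
  with \<open>ereal y < b\<close> have "y < b0" by simp
  have "eventually (\<lambda>t. y < t \<and> t < b0) (at_left b0)"
    unfolding eventually_at_left_field using \<open>y < b0\<close> by auto
  then show ?thesis using b0 assms unfolding at_left_e_def eoi_def
    by (auto elim!: eventually_mono intro: ereal_lt_trans1 ereal_lt_trans2)
qed

lemma F4: "at_left_e b \<noteq> bot"
  by (auto simp: at_left_e_def)

lemma F5:
  assumes "eventually P (at_left_e b)" and ab: "a < b"
  shows "\<exists>y. ereal y < b \<and> (\<forall>t. y < t \<and> ereal t < b \<longrightarrow> P t)"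
proof (cases "b = \<infinity>")
  case True
  have "eventually P at_top" using assms True by (simp add: at_left_e_def)
  then obtain N where "\<forall>n>N. P n" unfolding eventually_at_top_dense by auto
  then show ?thesis using True by (intro exI[of _ N]) auto
next
  case False
  then have "eventually P (at_left (real_of_ereal b))" using assms by (simp add: at_left_e_def)
  then obtain y where y: "y < real_of_ereal b" "\<forall>t>y. t < real_of_ereal b \<longrightarrow> P t"
    unfolding eventually_at_left_field by auto
  show ?thesis
  proof (cases b)
    case (real b0)
    then show ?thesis using y by (intro exI[of _ y]) auto
  next
    case PInf then show ?thesis using False by simp
  next
    case MInf
    then have "real_of_ereal b = 0" by simp
    then show ?thesis using ab MInf by simp
  qed
qed

lemma INC:
  fixes h h' :: "real \<Rightarrow> real"
  assumes uv: "u < v" "u \<in> eoi a b" "v \<in> eoi a b"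
    and d: "\<And>s. s \<in> eoi a b \<Longrightarrow> (h has_real_derivative h' s) (at s)"
    and pos: "\<And>s. u < s \<Longrightarrow> s < v \<Longrightarrow> h' s > 0"
  shows "h u < h v"
proof (rule DERIV_pos_imp_increasing_open[OF uv(1)])
  fix s assume "u < s" "s < v"
  then show "\<exists>y. (h has_real_derivative y) (at s) \<and> 0 < y"
    using d[of s] pos[of s] eoi_interval[OF uv(2,3), of s] by auto
next
  show "continuous_on {u..v} h"
    by (meson DERIV_isCont atLeastAtMost_iff continuous_at_imp_continuous_on d eoi_interval uv(2,3))
qed

lemma LIMpos:
  fixes h :: "real \<Rightarrow> real"
  assumes y: "y \<in> eoi a b"
    and inc: "\<And>u v. u \<in> eoi a b \<Longrightarrow> v \<in> eoi a b \<Longrightarrow> u < v \<Longrightarrow> v \<le> y \<Longrightarrow> h u < h v"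
    and lim: "(h \<longlongrightarrow> 0) (at_right_e a)"
  shows "h y > 0"
proof -
  have "a < ereal y" using y by (auto simp: eoi_def)
  then obtain z where z: "a < ereal z" "ereal z < ereal y" using ereal_dense2 by blast
  have zy: "z < y" using z by simp
  have zi: "z \<in> eoi a b" using z y zy by (auto simp: eoi_def intro: ereal_lt_trans1)
  have "eventually (\<lambda>t. h t \<le> h z) (at_right_e a)"
    using F1[OF zi] by (rule eventually_mono) (use inc zi zy in \<open>auto intro: less_imp_le\<close>)
  then have "0 \<le> h z" using tendsto_le[OF F2 tendsto_const lim] by blast
  also have "h z < h y" using inc[OF zi y zy] by simp
  finally show ?thesis .
qed



lemma eoi_sub: "ereal c \<le> b \<Longrightarrow> x \<in> eoi a c \<Longrightarrow> x \<in> eoi a b"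
  unfolding eoi_def by (auto intro: order.strict_trans2[of "ereal x" "ereal c" b])
lemma eoi_sub2: "a \<le> ereal c \<Longrightarrow> x \<in> eoi c b \<Longrightarrow> x \<in> eoi a b"
  unfolding eoi_def by (auto intro: order.strict_trans1)

lemma core:
  fixes a b :: ereal and f g f' g' :: "real \<Rightarrow> real" and L :: ereal and c :: real
  assumes ab: "a < b"
    and df: "\<And>x. x \<in> eoi a b \<Longrightarrow> (f has_real_derivative f' x) (at x)"
    and dg: "\<And>x. x \<in> eoi a b \<Longrightarrow> (g has_real_derivative g' x) (at x)"
    and gpos: "\<And>x. x \<in> eoi a b \<Longrightarrow> g' x > 0"
    and fa: "(f \<longlongrightarrow> 0) (at_right_e a)"
    and ga: "(g \<longlongrightarrow> 0) (at_right_e a)"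
    and HL: "((\<lambda>x. ereal (Hfg f g f' g' x)) \<longlongrightarrow> L) (at_left_e b)"
    and c: "c \<in> eoi a b"
    and rinc: "strict_mono_on (eoi a (ereal c)) (\<lambda>x. f' x / g' x)"
    and rdec: "strict_antimono_on (eoi (ereal c) b) (\<lambda>x. f' x / g' x)"
  shows "(L \<ge> 0 \<longrightarrow> strict_mono_on (eoi a b) (\<lambda>x. f x / g x)) \<and>
         (L < 0 \<longrightarrow> (\<exists>!xa. xa \<in> eoi a b \<and> strict_mono_on (eoi a (ereal xa)) (\<lambda>x. f x / g x) \<and>
                  strict_antimono_on (eoi (ereal xa) b) (\<lambda>x. f x / g x)))"
proof -
  define r where "r = (\<lambda>x. f' x / g' x)"
  define H where "H = Hfg f g f' g'"
  define \<phi> where "\<phi> = (\<lambda>x. f x / g x)"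
  have Hx: "H x = r x * g x - f x" for x by (simp add: H_def Hfg_def r_def)
  have ca: "a < ereal c" and cb: "ereal c < b" using c by (auto simp: eoi_def)
  have subA: "x \<in> eoi a b" if "x \<in> eoi a (ereal c)" for x using eoi_sub[OF _ that] cb by simp
  have subB: "x \<in> eoi a b" if "x \<in> eoi (ereal c) b" for x using eoi_sub2[OF _ that] ca by simp
  have gmono: "g u < g v" if "u \<in> eoi a b" "v \<in> eoi a b" "u < v" for u v
    by (rule INC[OF that(3,1,2) dg]) (use gpos eoi_interval[OF that(1,2)] in auto)
  have gp: "g x > 0" if "x \<in> eoi a b" for x
    by (rule LIMpos[OF that _ ga]) (use gmono in auto)
  have Hpos1: "H x > 0" if x: "x \<in> eoi a (ereal c)" for x
  proof -
    have xb: "x \<in> eoi a b" using subA[OF x] .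
    define k where "k = (\<lambda>s. r x * g s - f s)"
    have klim: "(k \<longlongrightarrow> 0) (at_right_e a)"
      unfolding k_def using tendsto_diff[OF tendsto_mult[OF tendsto_const ga] fa] by simp
    have kd: "(k has_real_derivative (r x * g' s - f' s)) (at s)" if "s \<in> eoi a b" for s
      unfolding k_def using dg[OF that] df[OF that] by (auto intro!: derivative_eq_intros)
    have "k x > 0"
    proof (rule LIMpos[OF xb _ klim])
      fix u v assume uv: "u \<in> eoi a b" "v \<in> eoi a b" "u < v" "v \<le> x"
      show "k u < k v"
      proof (rule INC[OF uv(3,1,2) kd])
        fix s assume s: "u < s" "s < v"
        have sb: "s \<in> eoi a b" using eoi_interval[OF uv(1,2), of s] s by auto
        have sc: "s \<in> eoi a (ereal c)" using sb s uv x by (auto simp: eoi_def intro: ereal_lt_trans1)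
        have "r s < r x" using rinc sc x s uv unfolding r_def monotone_on_def by auto
        moreover have "r x * g' s - f' s = g' s * (r x - r s)"
          using gpos[OF sb] by (simp add: r_def field_simps)
        ultimately show "r x * g' s - f' s > 0" using gpos[OF sb] by simp
      qed simp
    qed
    then show ?thesis by (simp add: k_def Hx)
  qed
  have Hdec: "H y < H x" if xy: "x \<in> eoi (ereal c) b" "y \<in> eoi (ereal c) b" "x < y" for x y
  proof -
    have xb: "x \<in> eoi a b" "y \<in> eoi a b" using subB xy by auto
    define k where "k = (\<lambda>s. f s - r y * g s)"
    have kd: "(k has_real_derivative (f' s - r y * g' s)) (at s)" if "s \<in> eoi a b" for s
      unfolding k_def using dg[OF that] df[OF that] by (auto intro!: derivative_eq_intros)
    have "k x < k y"
    proof (rule INC[OF xy(3) xb kd])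
      fix s assume s: "x < s" "s < y"
      have sb: "s \<in> eoi a b" using eoi_interval[OF xb, of s] s by auto
      have sc: "s \<in> eoi (ereal c) b" using eoi_interval[OF xy(1,2), of s] s by auto
      have "r y < r s" using rdec sc xy s unfolding r_def monotone_on_def by auto
      moreover have "f' s - r y * g' s = g' s * (r s - r y)"
        using gpos[OF sb] by (simp add: r_def field_simps)
      ultimately show "f' s - r y * g' s > 0" using gpos[OF sb] by simp
    qed simp
    moreover have "r y < r x" using rdec xy unfolding r_def monotone_on_def by auto
    then have "r y * g x < r x * g x" using gp[OF xb(1)] by simp
    ultimately show ?thesis unfolding Hx k_def by simp
  qed
  have dphi: "(\<phi> has_real_derivative (g' s * H s / (g s * g s))) (at s)" if "s \<in> eoi a b" for s
  proof -
    have "(\<phi> has_real_derivative ((f' s * g s - f s * g' s) / (g s * g s))) (at s)"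
      unfolding \<phi>_def using DERIV_divide[OF df[OF that] dg[OF that]] gp[OF that] by simp
    moreover have "f' s * g s - f s * g' s = g' s * H s"
      using gpos[OF that] by (simp add: Hx r_def field_simps)
    ultimately show ?thesis by simp
  qed
  have INC0: "\<phi> u < \<phi> v" if uv: "u \<in> eoi a b" "v \<in> eoi a b" "u < v"
      and pos: "\<And>s. u < s \<Longrightarrow> s < v \<Longrightarrow> H s > 0" for u v
    by (rule INC[OF uv(3,1,2) dphi]) (use pos gp gpos eoi_interval[OF uv(1,2)] in auto)
  have PH: "\<phi> u < \<phi> v" if uv: "u \<in> eoi a b" "v \<in> eoi a b" "u < v"
      and pos: "\<And>s. u < s \<Longrightarrow> s < v \<Longrightarrow> s \<noteq> c \<Longrightarrow> H s > 0" for u v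
  proof (cases "u < c \<and> c < v")
    case True
    have "\<phi> u < \<phi> c" by (rule INC0) (use uv c True pos in auto)
    also have "\<phi> c < \<phi> v" by (rule INC0) (use uv c True pos in auto)
    finally show ?thesis .
  next
    case False
    show ?thesis
    proof (rule INC0[OF uv])
      fix s assume s: "u < s" "s < v"
      then have "s \<noteq> c" using False by auto
      then show "H s > 0" using pos[OF s] by blast
    qed
  qed
  have NH: "\<phi> v < \<phi> u" if uv: "u \<in> eoi a b" "v \<in> eoi a b" "u < v"
      and neg: "\<And>s. u < s \<Longrightarrow> s < v \<Longrightarrow> H s < 0" for u v
  proof -
    have "(\<lambda>x. - \<phi> x) u < (\<lambda>x. - \<phi> x) v"
    proof (rule INC[OF uv(3,1,2)])
      fix s assume "s \<in> eoi a b"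
      then show "((\<lambda>x. - \<phi> x) has_real_derivative - (g' s * H s / (g s * g s))) (at s)"
        by (intro DERIV_minus dphi)
    next
      fix s assume s: "u < s" "s < v"
      have sb: "s \<in> eoi a b" using eoi_interval[OF uv(1,2), of s] s by auto
      have "g' s * H s < 0" using gpos[OF sb] neg[OF s] by (simp add: mult_pos_neg)
      moreover have "g s * g s > 0" using gp[OF sb] by simp
      ultimately show "- (g' s * H s / (g s * g s)) > 0" by (simp add: divide_neg_pos)
    qed
    then show ?thesis by simp
  qed
  show ?thesis
  proof (intro conjI impI)
    assume L0: "L \<ge> 0"
    have Hpos: "H s > 0" if s: "s \<in> eoi a b" "s \<noteq> c" for s
    proof (cases "s < c")
      case True
      then show ?thesis using s by (intro Hpos1) (auto simp: eoi_def)
    next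
      case False
      with s have sc: "s \<in> eoi (ereal c) b" by (auto simp: eoi_def)
      then obtain y where y: "ereal s < ereal y" "ereal y < b" using ereal_dense2[of "ereal s" b]
        by (auto simp: eoi_def)
      have yc: "y \<in> eoi (ereal c) b" using y sc by (auto simp: eoi_def intro: ereal_lt_trans2)
      have ev: "eventually (\<lambda>t. ereal (H t) \<le> ereal (H y)) (at_left_e b)"
        using F3[OF yc] by (rule eventually_mono) (use Hdec yc in \<open>auto intro: less_imp_le\<close>)
      have LH: "L \<le> ereal (H y)"
        using tendsto_le[OF F4 tendsto_const HL[folded H_def]] ev by blast
      have Hys: "H y < H s" using Hdec[OF sc yc] y by simp
      have "0 \<le> ereal (H y)" using L0 LH by (rule order.trans)
      then have "0 \<le> H y" by (simp add: zero_ereal_def)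
      then show ?thesis using Hys by simp
    qed
    show "strict_mono_on (eoi a b) (\<lambda>x. f x / g x)"
      unfolding monotone_on_def \<phi>_def[symmetric]
    proof (intro ballI impI)
      fix u v assume uv: "u \<in> eoi a b" "v \<in> eoi a b" "u < v"
      show "\<phi> u < \<phi> v"
      proof (rule PH[OF uv])
        fix s assume s: "u < s" "s < v" "s \<noteq> c"
        have "s \<in> eoi a b" using eoi_interval[OF uv(1,2), of s] s by simp
        then show "H s > 0" using Hpos s(3) by blast
      qed
    qed
  next
    assume L0: "L < 0"
    have "eventually (\<lambda>t. ereal (H t) < 0) (at_left_e b)"
      using order_tendstoD(2)[OF HL[folded H_def] L0] .
    then obtain y0 where y0: "ereal y0 < b" and y0H': "\<forall>t. y0 < t \<and> ereal t < b \<longrightarrow> ereal (H t) < 0"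
      using F5[OF _ ab] by blast
    have y0H: "H t < 0" if "y0 < t" "ereal t < b" for t
      using y0H' that by (simp add: zero_ereal_def)
    define S where "S = insert c {x. x \<in> eoi (ereal c) b \<and> H x \<ge> 0}"
    define m where "m = max y0 c"
    have Sm: "x \<le> m" if "x \<in> S" for x
    proof -
      have "x \<le> y0" if "x \<in> eoi (ereal c) b" "H x \<ge> 0"
        using y0H[of x] that by (force simp: eoi_def)
      then show ?thesis using that by (auto simp: S_def m_def)
    qed
    have bdd: "bdd_above S" using Sm by (auto simp: bdd_above_def)
    define xa where "xa = Sup S"
    have cxa: "c \<le> xa" unfolding xa_def by (rule cSup_upper[OF _ bdd]) (simp add: S_def)
    have xam: "xa \<le> m" unfolding xa_def by (rule cSup_least) (use Sm in \<open>auto simp: S_def\<close>)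
    have mb: "ereal m < b" using y0 cb by (simp add: m_def max_def)
    have xab: "xa \<in> eoi a b"
    proof -
      have c1: "ereal c \<le> ereal xa" and c2: "ereal xa \<le> ereal m" using cxa xam by auto
      have "a < ereal xa" using ca c1 by (rule order_less_le_trans)
      moreover have "ereal xa < b" using c2 mb by (rule order_le_less_trans)
      ultimately show ?thesis by (simp add: eoi_def)
    qed
    have Hbefore: "H s > 0" if s: "c < s" "s < xa" for s
    proof -
      obtain t where t: "t \<in> S" "s < t" using less_cSup_iff[OF _ bdd, of s] s
        unfolding xa_def S_def by auto
      have tc: "t \<in> eoi (ereal c) b" "H t \<ge> 0" using t s unfolding S_def by auto
      have sc: "s \<in> eoi (ereal c) b" using tc(1) s t
        by (auto simp: eoi_def intro: ereal_lt_trans1)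
      show ?thesis using Hdec[OF sc tc(1) t(2)] tc(2) by simp
    qed
    have Hafter: "H s < 0" if s: "xa < s" "s \<in> eoi a b" for s
    proof -
      have sc: "s \<in> eoi (ereal c) b" using s cxa by (auto simp: eoi_def)
      have "s \<notin> S"
      proof
        assume "s \<in> S"
        then have "s \<le> xa" unfolding xa_def by (rule cSup_upper[OF _ bdd])
        with s show False by simp
      qed
      then show ?thesis using sc unfolding S_def by auto
    qed
    have axa: "a < ereal xa" and xab': "ereal xa < b" using xab by (auto simp: eoi_def)
    have mono1: "strict_mono_on (eoi a (ereal xa)) \<phi>"
      unfolding monotone_on_def
    proof (intro ballI impI)
      fix u v assume uv: "u \<in> eoi a (ereal xa)" "v \<in> eoi a (ereal xa)" "u < v"
      have ub: "u \<in> eoi a b" "v \<in> eoi a b" using uv eoi_sub[OF less_imp_le[OF xab']] by auto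
      show "\<phi> u < \<phi> v"
      proof (rule PH[OF ub uv(3)])
        fix s assume s: "u < s" "s < v" "s \<noteq> c"
        have sxa: "s < xa" using s uv by (auto simp: eoi_def)
        show "H s > 0"
        proof (cases "s < c")
          case True
          have "a < ereal s" using uv s by (auto simp: eoi_def intro: ereal_lt_trans2)
          then show ?thesis using True by (intro Hpos1) (simp add: eoi_def)
        next
          case False
          then show ?thesis using s sxa by (intro Hbefore) auto
        qed
      qed
    qed
    have mono2: "strict_antimono_on (eoi (ereal xa) b) \<phi>"
      unfolding monotone_on_def
    proof (intro ballI impI)
      fix u v assume uv: "u \<in> eoi (ereal xa) b" "v \<in> eoi (ereal xa) b" "u < v"
      have ub: "u \<in> eoi a b" "v \<in> eoi a b" using uv eoi_sub2[OF less_imp_le[OF axa]] by auto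
      show "\<phi> v < \<phi> u"
      proof (rule NH[OF ub uv(3)])
        fix s assume s: "u < s" "s < v"
        show "H s < 0" using s uv eoi_interval[OF ub, of s] by (intro Hafter) (auto simp: eoi_def)
      qed
    qed
    have uniq: "xb = xa" if xb: "xb \<in> eoi a b" "strict_mono_on (eoi a (ereal xb)) \<phi>"
         "strict_antimono_on (eoi (ereal xb) b) \<phi>" for xb
    proof (rule ccontr)
      assume ne: "xb \<noteq> xa"
      have gen: False if p1: "p \<in> eoi a b" "q \<in> eoi a b" "p < q"
        and m1: "strict_mono_on (eoi a (ereal q')) \<phi>" and m2: "strict_antimono_on (eoi (ereal p') b) \<phi>"
        and pq: "p' < p" "q < q'" for p q p' q'
      proof -
        have "p \<in> eoi a (ereal q')" "q \<in> eoi a (ereal q')" using p1 pq by (auto simp: eoi_def)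
        then have "\<phi> p < \<phi> q" using m1 p1(3) unfolding monotone_on_def by blast
        moreover have "p \<in> eoi (ereal p') b" "q \<in> eoi (ereal p') b" using p1 pq by (auto simp: eoi_def)
        then have "\<phi> q < \<phi> p" using m2 p1(3) unfolding monotone_on_def by blast
        ultimately show False by simp
      qed
      have gen2: False if lt: "x1 < x2" "x1 \<in> eoi a b" "x2 \<in> eoi a b"
        and m1: "strict_mono_on (eoi a (ereal x2)) \<phi>" and m2: "strict_antimono_on (eoi (ereal x1) b) \<phi>" for x1 x2
      proof -
        define p where "p = x1 + (x2 - x1) / 3"
        define q where "q = x1 + 2 * (x2 - x1) / 3"
        have pq: "x1 < p" "p < q" "q < x2" using lt by (auto simp: p_def q_def field_simps)
        have "p \<in> eoi a b" "q \<in> eoi a b" using eoi_interval[OF lt(2,3)] pq by auto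
        then show False using gen[OF _ _ pq(2) m1 m2] pq by auto
      qed
      show False
      proof (cases "xb < xa")
        case True then show ?thesis using gen2[OF True xb(1) xab mono1 xb(3)] by simp
      next
        case False
        with ne have "xa < xb" by simp
        then show ?thesis using gen2[OF _ xab xb(1) xb(2) mono2] by simp
      qed
    qed
    show "\<exists>!xa. xa \<in> eoi a b \<and> strict_mono_on (eoi a (ereal xa)) (\<lambda>x. f x / g x) \<and>
                  strict_antimono_on (eoi (ereal xa) b) (\<lambda>x. f x / g x)"
    proof (rule ex1I[of _ xa])
      show "xa \<in> eoi a b \<and> strict_mono_on (eoi a (ereal xa)) (\<lambda>x. f x / g x) \<and>
                  strict_antimono_on (eoi (ereal xa) b) (\<lambda>x. f x / g x)"
        using xab mono1 mono2 unfolding \<phi>_def by simp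
    next
      fix xb assume "xb \<in> eoi a b \<and> strict_mono_on (eoi a (ereal xb)) (\<lambda>x. f x / g x) \<and>
                  strict_antimono_on (eoi (ereal xb) b) (\<lambda>x. f x / g x)"
      then show "xb = xa" using uniq[of xb] unfolding \<phi>_def by simp
    qed
  qed
qed



lemma esgn_uminus: "esgn (- L) = - esgn L"
  by (cases L) (auto simp: esgn_def)

lemma esgn_simps: "esgn L \<ge> 0 \<longleftrightarrow> L \<ge> 0" "esgn L < 0 \<longleftrightarrow> L < 0"
  by (auto simp: esgn_def)

lemma Hfg_neg: "Hfg (\<lambda>x. - f x) (\<lambda>x. - g x) (\<lambda>x. - f' x) (\<lambda>x. - g' x) x = - Hfg f g f' g' x"
  by (simp add: Hfg_def)

lemma Hfg_negf: "Hfg (\<lambda>x. - f x) g (\<lambda>x. - f' x) g' x = - Hfg f g f' g' x"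
  by (simp add: Hfg_def)

lemma partA:
  fixes a b :: ereal and f g f' g' :: "real \<Rightarrow> real" and L :: ereal
  assumes ab: "a < b"
    and df: "\<And>x. x \<in> eoi a b \<Longrightarrow> (f has_real_derivative f' x) (at x)"
    and dg: "\<And>x. x \<in> eoi a b \<Longrightarrow> (g has_real_derivative g' x) (at x)"
    and g'nz: "\<And>x. x \<in> eoi a b \<Longrightarrow> g' x \<noteq> 0"
    and fa: "(f \<longlongrightarrow> 0) (at_right_e a)"
    and ga: "(g \<longlongrightarrow> 0) (at_right_e a)"
    and HL: "((\<lambda>x. ereal (Hfg f g f' g' x)) \<longlongrightarrow> L) (at_left_e b)"
  shows
   "((\<exists>c \<in> eoi a b. strict_mono_on (eoi a (ereal c)) (\<lambda>x. f' x / g' x) \<and>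
                     strict_antimono_on (eoi (ereal c) b) (\<lambda>x. f' x / g' x)) \<longrightarrow>
       ((\<forall>x \<in> eoi a b. sgn (g' x) * esgn L \<ge> 0) \<longrightarrow>
           strict_mono_on (eoi a b) (\<lambda>x. f x / g x)) \<and>
       ((\<forall>x \<in> eoi a b. sgn (g' x) * esgn L < 0) \<longrightarrow>
           (\<exists>!xa. xa \<in> eoi a b \<and> strict_mono_on (eoi a (ereal xa)) (\<lambda>x. f x / g x) \<and>
                  strict_antimono_on (eoi (ereal xa) b) (\<lambda>x. f x / g x))))"
proof (intro impI)
  assume "\<exists>c \<in> eoi a b. strict_mono_on (eoi a (ereal c)) (\<lambda>x. f' x / g' x) \<and>
                     strict_antimono_on (eoi (ereal c) b) (\<lambda>x. f' x / g' x)"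
  then obtain c where c: "c \<in> eoi a b" and rinc: "strict_mono_on (eoi a (ereal c)) (\<lambda>x. f' x / g' x)"
    and rdec: "strict_antimono_on (eoi (ereal c) b) (\<lambda>x. f' x / g' x)" by blast
  obtain x0 where x0: "x0 \<in> eoi a b" using eoi_nonempty[OF ab] by auto
  consider "\<forall>x\<in>eoi a b. g' x > 0" | "\<forall>x\<in>eoi a b. g' x < 0" using const_sign[OF ab dg g'nz] by blast
  then show "((\<forall>x \<in> eoi a b. sgn (g' x) * esgn L \<ge> 0) \<longrightarrow>
           strict_mono_on (eoi a b) (\<lambda>x. f x / g x)) \<and>
       ((\<forall>x \<in> eoi a b. sgn (g' x) * esgn L < 0) \<longrightarrow>
           (\<exists>!xa. xa \<in> eoi a b \<and> strict_mono_on (eoi a (ereal xa)) (\<lambda>x. f x / g x) \<and>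
                  strict_antimono_on (eoi (ereal xa) b) (\<lambda>x. f x / g x)))"
  proof cases
    case 1
    have hyp1: "(\<forall>x \<in> eoi a b. sgn (g' x) * esgn L \<ge> 0) \<longleftrightarrow> L \<ge> 0"
      using 1 x0 by (auto simp: esgn_simps)
    have hyp2: "(\<forall>x \<in> eoi a b. sgn (g' x) * esgn L < 0) \<longleftrightarrow> L < 0"
      using 1 x0 by (auto simp: esgn_simps)
    show ?thesis unfolding hyp1 hyp2
      by (rule core[OF ab df dg _ fa ga HL c rinc rdec]) (use 1 in auto)
  next
    case 2
    have hyp1: "(\<forall>x \<in> eoi a b. sgn (g' x) * esgn L \<ge> 0) \<longleftrightarrow> - L \<ge> 0"
      using 2 x0 by (auto simp: esgn_simps esgn_uminus[symmetric])
    have hyp2: "(\<forall>x \<in> eoi a b. sgn (g' x) * esgn L < 0) \<longleftrightarrow> - L < 0"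
      using 2 x0 by (auto simp: esgn_simps esgn_uminus[symmetric])
    have phi: "(\<lambda>x. f x / g x) = (\<lambda>x. (- f x) / (- g x))" by simp
    have r: "(\<lambda>x. f' x / g' x) = (\<lambda>x. (- f' x) / (- g' x))" by simp
    have HL': "((\<lambda>x. ereal (Hfg (\<lambda>x. - f x) (\<lambda>x. - g x) (\<lambda>x. - f' x) (\<lambda>x. - g' x) x)) \<longlongrightarrow> - L) (at_left_e b)"
      unfolding Hfg_neg using tendsto_uminus_ereal[OF HL] by simp
    show ?thesis unfolding hyp1 hyp2 phi
    proof (rule core[of a b "\<lambda>x. - f x" "\<lambda>x. - f' x" "\<lambda>x. - g x" "\<lambda>x. - g' x", OF ab _ _ _ _ _ HL' c])
      show "strict_mono_on (eoi a (ereal c)) (\<lambda>x. - f' x / - g' x)" using rinc by simp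
      show "strict_antimono_on (eoi (ereal c) b) (\<lambda>x. - f' x / - g' x)" using rdec by simp
      show "((\<lambda>x. - f x) \<longlongrightarrow> 0) (at_right_e a)" using tendsto_minus[OF fa] by simp
      show "((\<lambda>x. - g x) \<longlongrightarrow> 0) (at_right_e a)" using tendsto_minus[OF ga] by simp
    qed (use 2 df dg in \<open>auto intro: DERIV_minus\<close>)
  qed
qed

lemma mono_neg: "strict_mono_on S (\<lambda>x. - (h x :: real)) \<longleftrightarrow> strict_antimono_on S h"
  "strict_antimono_on S (\<lambda>x. - (h x :: real)) \<longleftrightarrow> strict_mono_on S h"
  by (auto simp: monotone_on_def)


theorem mainTheorem3:
  fixes a b :: ereal and f g f' g' :: "real \<Rightarrow> real" and L :: ereal
  assumes ab: "a < b"
    and df: "\<And>x. x \<in> eoi a b \<Longrightarrow> (f has_real_derivative f' x) (at x)"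
    and dg: "\<And>x. x \<in> eoi a b \<Longrightarrow> (g has_real_derivative g' x) (at x)"
    and g'nz: "\<And>x. x \<in> eoi a b \<Longrightarrow> g' x \<noteq> 0"
    and fa: "(f \<longlongrightarrow> 0) (at_right_e a)"
    and ga: "(g \<longlongrightarrow> 0) (at_right_e a)"
    and HL: "((\<lambda>x. ereal (Hfg f g f' g' x)) \<longlongrightarrow> L) (at_left_e b)"
  shows
   "((\<exists>c \<in> eoi a b. strict_mono_on (eoi a (ereal c)) (\<lambda>x. f' x / g' x) \<and>
                     strict_antimono_on (eoi (ereal c) b) (\<lambda>x. f' x / g' x)) \<longrightarrow>
       ((\<forall>x \<in> eoi a b. sgn (g' x) * esgn L \<ge> 0) \<longrightarrow>
           strict_mono_on (eoi a b) (\<lambda>x. f x / g x)) \<and>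
       ((\<forall>x \<in> eoi a b. sgn (g' x) * esgn L < 0) \<longrightarrow>
           (\<exists>!xa. xa \<in> eoi a b \<and> strict_mono_on (eoi a (ereal xa)) (\<lambda>x. f x / g x) \<and>
                  strict_antimono_on (eoi (ereal xa) b) (\<lambda>x. f x / g x))))
    \<and>
    ((\<exists>c \<in> eoi a b. strict_antimono_on (eoi a (ereal c)) (\<lambda>x. f' x / g' x) \<and>
                     strict_mono_on (eoi (ereal c) b) (\<lambda>x. f' x / g' x)) \<longrightarrow>
       ((\<forall>x \<in> eoi a b. sgn (g' x) * esgn L \<le> 0) \<longrightarrow>
           strict_antimono_on (eoi a b) (\<lambda>x. f x / g x)) \<and>
       ((\<forall>x \<in> eoi a b. sgn (g' x) * esgn L > 0) \<longrightarrow>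
           (\<exists>!xa. xa \<in> eoi a b \<and> strict_antimono_on (eoi a (ereal xa)) (\<lambda>x. f x / g x) \<and>
                  strict_mono_on (eoi (ereal xa) b) (\<lambda>x. f x / g x))))"
  proof (rule conjI)
  show "(\<exists>c \<in> eoi a b. strict_mono_on (eoi a (ereal c)) (\<lambda>x. f' x / g' x) \<and>
                     strict_antimono_on (eoi (ereal c) b) (\<lambda>x. f' x / g' x)) \<longrightarrow>
       ((\<forall>x \<in> eoi a b. sgn (g' x) * esgn L \<ge> 0) \<longrightarrow>
           strict_mono_on (eoi a b) (\<lambda>x. f x / g x)) \<and>
       ((\<forall>x \<in> eoi a b. sgn (g' x) * esgn L < 0) \<longrightarrow>
           (\<exists>!xa. xa \<in> eoi a b \<and> strict_mono_on (eoi a (ereal xa)) (\<lambda>x. f x / g x) \<and>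
                  strict_antimono_on (eoi (ereal xa) b) (\<lambda>x. f x / g x)))"
    by (rule partA[OF ab df dg g'nz fa ga HL])
next
  have HL': "((\<lambda>x. ereal (Hfg (\<lambda>x. - f x) g (\<lambda>x. - f' x) g' x)) \<longlongrightarrow> - L) (at_left_e b)"
    unfolding Hfg_negf using tendsto_uminus_ereal[OF HL] by simp
  have fa': "((\<lambda>x. - f x) \<longlongrightarrow> 0) (at_right_e a)" using tendsto_minus[OF fa] by simp
  have df': "\<And>x. x \<in> eoi a b \<Longrightarrow> ((\<lambda>x. - f x) has_real_derivative - f' x) (at x)"
    using df by (auto intro: DERIV_minus)
  note A = partA[of a b "\<lambda>x. - f x" "\<lambda>x. - f' x" g g' "- L", OF ab df' dg g'nz fa' ga HL']
  have e1: "(\<lambda>x. - f' x / g' x) = (\<lambda>x. - (f' x / g' x))" "(\<lambda>x. - f x / g x) = (\<lambda>x. - (f x / g x))" by auto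
  have e2: "sgn (g' x) * esgn (- L) \<ge> 0 \<longleftrightarrow> sgn (g' x) * esgn L \<le> 0"
     "sgn (g' x) * esgn (- L) < 0 \<longleftrightarrow> sgn (g' x) * esgn L > 0" for x
    by (auto simp: esgn_uminus)
  show "(\<exists>c \<in> eoi a b. strict_antimono_on (eoi a (ereal c)) (\<lambda>x. f' x / g' x) \<and>
                     strict_mono_on (eoi (ereal c) b) (\<lambda>x. f' x / g' x)) \<longrightarrow>
       ((\<forall>x \<in> eoi a b. sgn (g' x) * esgn L \<le> 0) \<longrightarrow>
           strict_antimono_on (eoi a b) (\<lambda>x. f x / g x)) \<and>
       ((\<forall>x \<in> eoi a b. sgn (g' x) * esgn L > 0) \<longrightarrow>
           (\<exists>!xa. xa \<in> eoi a b \<and> strict_antimono_on (eoi a (ereal xa)) (\<lambda>x. f x / g x) \<and>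
                  strict_mono_on (eoi (ereal xa) b) (\<lambda>x. f x / g x)))"
    using A unfolding e1 e2 mono_neg .
qed

end
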